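(* Let $P$ be a poset with least element $0$. Then the metric dimension $\dim_M(G(P))$ of the zero-divisor graph $G(P)$ is finite if and only if $G(P)$ is a finite graph.
   Context: For a poset $P$ with $0$ and $A\subseteq P$, $A^{\ell}=\{b\in P: b\le a \text{ for all } a\in A\}$. An element $a\in P$ is a zero-divisor if there is $b\in P\setminus\{0\}$ with $\{a,b\}^{\ell}=\{0\}$; $Z(P)$ is the set of zero-divisors and $Z^*(P)=Z(P)\setminus\{0\}$. The zero-divisor graph $G(P)$ is the simple graph with vertex set $Z^*(P)$ in which distinct $a,b$ are adjacent iff $\{a,b\}^{\ell}=\{0\}$. (It is known that $G(P)$ is connected of diameter at most $3$.) For a connected graph $G$ and an ordered set $S=\{v_1,\dots,v_k\}\subseteq V(G)$, the representation of $v$ is $D(v|S)=(d(v,v_1),\dots,d(v,v_k))$; $S$ is a resolving set if $D(u|S)=D(v|S)$ for $u,v\in V(G)\setminus S$ implies $u=v$. The metric dimension $\dim_M(G)$ is the minimum cardinality of a resolving set. *)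

theory Defs
  imports Main "HOL-Library.Extended_Nat"
begin

definition lower_cone :: "'a::order set \<Rightarrow> 'a set" where
  "lower_cone A = {b. \<forall>a\<in>A. b \<le> a}"

definition zero_divisor :: "'a::order_bot \<Rightarrow> bool" where
  "zero_divisor a \<longleftrightarrow> (\<exists>b. b \<noteq> bot \<and> lower_cone {a, b} = {bot})"

definition Zstar :: "'a::order_bot set" where
  "Zstar = {a. zero_divisor a \<and> a \<noteq> bot}"

definition zd_adj :: "'a::order_bot \<Rightarrow> 'a \<Rightarrow> bool" where
  "zd_adj a b \<longleftrightarrow> a \<in> Zstar \<and> b \<in> Zstar \<and> a \<noteq> b \<and> lower_cone {a, b} = {bot}"

text \<open>Graph given by vertex set V and adjacency relation E (edges lie within V).
  Distance = length of a shortest walk; infinity if none.\<close>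

definition gdist :: "('a \<Rightarrow> 'a \<Rightarrow> bool) \<Rightarrow> 'a \<Rightarrow> 'a \<Rightarrow> enat" where
  "gdist E u v = Inf {enat n | n. (u, v) \<in> {(x, y). E x y} ^^ n}"

definition resolving :: "'a set \<Rightarrow> ('a \<Rightarrow> 'a \<Rightarrow> bool) \<Rightarrow> 'a set \<Rightarrow> bool" where
  "resolving V E S \<longleftrightarrow> S \<subseteq> V \<and>
     (\<forall>u\<in>V - S. \<forall>v\<in>V - S. (\<forall>s\<in>S. gdist E u s = gdist E v s) \<longrightarrow> u = v)"

definition metric_dim :: "'a set \<Rightarrow> ('a \<Rightarrow> 'a \<Rightarrow> bool) \<Rightarrow> enat" where
  "metric_dim V E = Inf {(if finite S then enat (card S) else \<infinity>) | S. resolving V E S}"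

end

theory Submission
  imports Defs "HOL-Library.FuncSet"
begin

lemma lc_iff: "lower_cone {a, b} = {bot} \<longleftrightarrow> (\<forall>z. z \<le> a \<and> z \<le> b \<longrightarrow> z = (bot::'a::order_bot))"
  unfolding lower_cone_def by auto

lemma adj_intro:
  fixes a b :: "'a::order_bot"
  assumes "a \<noteq> bot" "b \<noteq> bot" "\<forall>z. z \<le> a \<and> z \<le> b \<longrightarrow> z = bot"
  shows "zd_adj a b"
proof -
  have c: "lower_cone {a, b} = {bot}" using assms(3) lc_iff by blast
  have c2: "lower_cone {b, a} = {bot}" using c by (simp add: insert_commute)
  have "a \<noteq> b" using assms by auto
  moreover have "a \<in> Zstar" using assms c unfolding Zstar_def zero_divisor_def by blast
  moreover have "b \<in> Zstar" using assms c2 unfolding Zstar_def zero_divisor_def by blast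
  ultimately show ?thesis using c unfolding zd_adj_def by blast
qed

lemma partner:
  fixes a :: "'a::order_bot"
  assumes "a \<in> Zstar"
  shows "\<exists>x. x \<noteq> bot \<and> (\<forall>z. z \<le> a \<and> z \<le> x \<longrightarrow> z = bot)"
  using assms unfolding Zstar_def zero_divisor_def lc_iff by blast

lemma gdist_le:
  assumes "(u, v) \<in> {(x, y). E x y} ^^ n"
  shows "gdist E u v \<le> enat n"
  unfolding gdist_def using assms by (auto intro!: Inf_lower)

lemma diam:
  fixes a b :: "'a::order_bot"
  assumes a: "a \<in> Zstar" and b: "b \<in> Zstar"
  shows "gdist zd_adj a b \<le> enat 3"
proof -
  let ?R = "{(x, y). zd_adj x y}"
  have a0: "a \<noteq> bot" using a unfolding Zstar_def by auto
  have b0: "b \<noteq> bot" using b unfolding Zstar_def by auto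
  obtain x where x: "x \<noteq> bot" "\<forall>z. z \<le> a \<and> z \<le> x \<longrightarrow> z = bot" using partner[OF a] by blast
  obtain y where y: "y \<noteq> bot" "\<forall>z. z \<le> b \<and> z \<le> y \<longrightarrow> z = bot" using partner[OF b] by blast
  have ax: "(a, x) \<in> ?R" using adj_intro[OF a0 x(1)] x(2) by auto
  have yb: "(y, b) \<in> ?R" using adj_intro[OF y(1) b0] y(2) by auto
  show ?thesis
  proof (cases "\<forall>z. z \<le> x \<and> z \<le> y \<longrightarrow> z = bot")
    case True
    have xy: "(x, y) \<in> ?R" using adj_intro[OF x(1) y(1)] True by auto
    have "(a, a) \<in> ?R ^^ 0" by simp
    then have "(a, x) \<in> ?R ^^ Suc 0" using ax by (rule relpow_Suc_I)
    then have "(a, y) \<in> ?R ^^ Suc (Suc 0)" using xy by (rule relpow_Suc_I)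
    then have "(a, b) \<in> ?R ^^ Suc (Suc (Suc 0))" using yb by (rule relpow_Suc_I)
    then have "gdist zd_adj a b \<le> enat (Suc (Suc (Suc 0)))" by (rule gdist_le)
    then show ?thesis by (simp add: numeral_3_eq_3)
  next
    case False
    then obtain z where z: "z \<le> x" "z \<le> y" "z \<noteq> bot" by blast
    have az: "(a, z) \<in> ?R" using adj_intro[OF a0 z(3)] x(2) z order_trans by auto
    have zb: "(z, b) \<in> ?R" using adj_intro[OF z(3) b0] y(2) z order_trans by auto
    have "(a, a) \<in> ?R ^^ 0" by simp
    then have "(a, z) \<in> ?R ^^ Suc 0" using az by (rule relpow_Suc_I)
    then have "(a, b) \<in> ?R ^^ Suc (Suc 0)" using zb by (rule relpow_Suc_I)
    then have "gdist zd_adj a b \<le> enat (Suc (Suc 0))" by (rule gdist_le)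
    also have "\<dots> \<le> enat 3" by simp
    finally show ?thesis .
  qed
qed

lemma enat_le3_finite: "finite {x::enat. x \<le> enat 3}"
proof -
  have "{x::enat. x \<le> enat 3} \<subseteq> enat ` {..3}"
  proof
    fix x :: enat assume "x \<in> {x. x \<le> enat 3}"
    then show "x \<in> enat ` {..3}" by (cases x) auto
  qed
  then show ?thesis by (rule finite_subset) simp
qed

theorem mainTheorem1:
  shows "metric_dim (Zstar :: 'a::order_bot set) zd_adj \<noteq> \<infinity> \<longleftrightarrow> finite (Zstar :: 'a set)"
proof
  assume "metric_dim (Zstar :: 'a set) zd_adj \<noteq> \<infinity>"
  then obtain S :: "'a set" where S: "resolving Zstar zd_adj S" "finite S"
  proof -
    let ?A = "{(if finite S then enat (card S) else \<infinity>) | S::'a set. resolving Zstar zd_adj S}"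
    have "Inf ?A \<noteq> top" using \<open>metric_dim (Zstar :: 'a set) zd_adj \<noteq> \<infinity>\<close> unfolding metric_dim_def top_enat_def by assumption
    have "\<exists>y\<in>?A. y \<noteq> top"
    proof (rule ccontr)
      assume "\<not> (\<exists>y\<in>?A. y \<noteq> top)"
      then have "\<forall>y\<in>?A. y = top" by blast
      then have "Inf ?A = top" by (rule Inf_top_conv(1)[THEN iffD2])
      then show False using \<open>Inf ?A \<noteq> top\<close> by blast
    qed
    then obtain y where "y \<in> ?A" "y \<noteq> top" by blast
    then obtain S :: "'a set" where S1: "resolving Zstar zd_adj S" and S2: "y = (if finite S then enat (card S) else \<infinity>)" by blast
    have "finite S"
    proof (rule ccontr)
      assume "infinite S"
      then have "y = top" using S2 by (simp add: top_enat_def)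
      then show False using \<open>y \<noteq> top\<close> by blast
    qed
    then show ?thesis using that S1 by blast
  qed
  let ?V = "(Zstar :: 'a set)"
  let ?f = "\<lambda>u::'a. restrict (\<lambda>s. gdist zd_adj u s) S"
  have inj: "inj_on ?f (?V - S)"
  proof (rule inj_onI)
    fix u v assume u: "u \<in> ?V - S" and v: "v \<in> ?V - S" and e: "?f u = ?f v"
    have "\<forall>s\<in>S. gdist zd_adj u s = gdist zd_adj v s"
    proof
      fix s assume "s \<in> S"
      then show "gdist zd_adj u s = gdist zd_adj v s" using e by (metis restrict_apply')
    qed
    then show "u = v" using S(1) u v unfolding resolving_def by blast
  qed
  have sub: "?f ` (?V - S) \<subseteq> PiE S (\<lambda>_. {x::enat. x \<le> enat 3})"
    using S(1) unfolding resolving_def by (auto intro!: diam)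
  have "finite (PiE S (\<lambda>_. {x::enat. x \<le> enat 3}))"
    using S(2) enat_le3_finite by (simp add: finite_PiE)
  then have "finite (?f ` (?V - S))" using sub finite_subset by blast
  then have "finite (?V - S)" using inj finite_imageD by blast
  then show "finite ?V" using S(2) by (metis Diff_partition finite_UnI S(1) resolving_def)
next
  assume fin: "finite (Zstar :: 'a set)"
  have "resolving (Zstar :: 'a set) zd_adj Zstar" unfolding resolving_def by auto
  then have "metric_dim (Zstar :: 'a set) zd_adj \<le> enat (card (Zstar :: 'a set))"
    unfolding metric_dim_def using fin by (force intro!: Inf_lower)
  then show "metric_dim (Zstar :: 'a set) zd_adj \<noteq> \<infinity>" using enat_ile by fastforce
qed

end
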